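(* In the communication-compressed SGD with error feedback described in the context, where the compression operator $Q$ satisfies $\|Q(\vec w)-\vec w\|^2\le\gamma\|\vec w\|^2$ for all $\vec w\in\mathbb{R}^d$ with $0\le\gamma<1$, for every node $q$ and iteration $t\ge0$, $$\mathbb{E}\|\vec x_t-\vec v_t^q\|^2\le\frac{(2-\gamma)\gamma M^2\alpha^2}{(1-\gamma)^3}.$$
   Context: There are $p$ nodes $\mathcal P=\{1,\dots,p\}$ and a learning rate $\alpha>0$. Each node $i$ keeps a view $\vec v_t^i$ and an error vector $\vec\epsilon_t^i$, with $\vec v_0^i=\vec\epsilon_0^i=\vec 0$; also $\vec x_0=\vec 0$. At iteration $t$, node $i$ computes a stochastic gradient $\tilde G(\vec v_t^i)$ with $\mathbb{E}\|\tilde G(\vec v_t^i)\|^2\le M^2$, forms $\vec w_t^i=\vec\epsilon_t^i+\alpha\tilde G(\vec v_t^i)$, broadcasts $Q(\vec w_t^i)$, and sets $\vec\epsilon_{t+1}^i=\vec w_t^i-Q(\vec w_t^i)$. Every node $q$ updates $\vec v_{t+1}^q=\vec v_t^q-\frac1p\sum_{i\in\mathcal P}Q(\vec w_t^i)$ (so all views coincide), and the global parameter is $\vec x_{t+1}=\vec x_t-\frac{\alpha}{p}\sum_{i\in\mathcal P}\tilde G(\vec v_t^i)$. *)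

theory Defs
  imports "HOL-Probability.Probability"
begin

text \<open>State of the error-feedback compressed SGD after t iterations, for one fixed
  outcome of the randomness.  Nodes are 1..p.  Q is the compression operator,
  G v s is the stochastic gradient at point v with random sample s, and
  xi t i is the sample used by node i at iteration t.
  The state is (views v_t^i, error vectors eps_t^i, global parameter x_t).\<close>

fun ef_state :: "('v::real_normed_vector \<Rightarrow> 'v) \<Rightarrow> ('v \<Rightarrow> 'b \<Rightarrow> 'v) \<Rightarrow> (nat \<Rightarrow> nat \<Rightarrow> 'b)
    \<Rightarrow> nat \<Rightarrow> real \<Rightarrow> nat \<Rightarrow> (nat \<Rightarrow> 'v) \<times> (nat \<Rightarrow> 'v) \<times> 'v" where
  "ef_state Q G xi p \<alpha> 0 = ((\<lambda>i. 0), (\<lambda>i. 0), 0)"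
| "ef_state Q G xi p \<alpha> (Suc t) =
     (case ef_state Q G xi p \<alpha> t of (v, e, x) \<Rightarrow>
        (let g = (\<lambda>i. G (v i) (xi t i));
             w = (\<lambda>i. e i + \<alpha> *\<^sub>R g i)
         in ((\<lambda>q. v q - (1 / real p) *\<^sub>R (\<Sum>i\<in>{1..p}. Q (w i))),
             (\<lambda>i. w i - Q (w i)),
             x - (\<alpha> / real p) *\<^sub>R (\<Sum>i\<in>{1..p}. g i))))"

definition ef_view where
  "ef_view Q G xi p \<alpha> t q = fst (ef_state Q G xi p \<alpha> t) q"

definition ef_err where
  "ef_err Q G xi p \<alpha> t i = fst (snd (ef_state Q G xi p \<alpha> t)) i"

definition ef_x where
  "ef_x Q G xi p \<alpha> t = snd (snd (ef_state Q G xi p \<alpha> t))"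

definition ef_grad where
  "ef_grad Q G xi p \<alpha> t i = G (ef_view Q G xi p \<alpha> t i) (xi t i)"

end

theory Submission
  imports Defs
begin

lemma ef_view_Suc: "ef_view Q G xi p \<alpha> (Suc t) q = ef_view Q G xi p \<alpha> t q
   - (1 / real p) *\<^sub>R (\<Sum>i\<in>{1..p}. Q (ef_err Q G xi p \<alpha> t i + \<alpha> *\<^sub>R ef_grad Q G xi p \<alpha> t i))"
  by (simp add: ef_view_def ef_err_def ef_grad_def split: prod.split)

lemma ef_err_Suc: "ef_err Q G xi p \<alpha> (Suc t) i =
   (ef_err Q G xi p \<alpha> t i + \<alpha> *\<^sub>R ef_grad Q G xi p \<alpha> t i) - Q (ef_err Q G xi p \<alpha> t i + \<alpha> *\<^sub>R ef_grad Q G xi p \<alpha> t i)"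
  by (simp add: ef_view_def ef_err_def ef_grad_def split: prod.split)

lemma ef_x_Suc: "ef_x Q G xi p \<alpha> (Suc t) = ef_x Q G xi p \<alpha> t - (\<alpha> / real p) *\<^sub>R (\<Sum>i\<in>{1..p}. ef_grad Q G xi p \<alpha> t i)"
  by (simp add: ef_view_def ef_x_def ef_grad_def split: prod.split)

lemma ef_diff: "ef_x Q G xi p \<alpha> t - ef_view Q G xi p \<alpha> t q = - ((1 / real p) *\<^sub>R (\<Sum>i\<in>{1..p}. ef_err Q G xi p \<alpha> t i))"
proof (induction t)
  case 0
  then show ?case by (simp add: ef_view_def ef_x_def ef_err_def)
next
  case (Suc t)
  have e: "(\<alpha> / real p) *\<^sub>R (\<Sum>i\<in>{1..p}. ef_grad Q G xi p \<alpha> t i) = (1 / real p) *\<^sub>R (\<Sum>i\<in>{1..p}. \<alpha> *\<^sub>R ef_grad Q G xi p \<alpha> t i)"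
    by (simp add: scaleR_sum_right)
  show ?case
    unfolding ef_view_Suc ef_x_Suc ef_err_Suc e
    using Suc.IH
    by (simp add: sum_subtractf sum.distrib scaleR_diff_right scaleR_add_right algebra_simps)
qed

lemma key_ineq:
  fixes s A B :: real
  assumes "0 \<le> s" "s < 1" "0 \<le> A" "0 \<le> B"
  shows "s\<^sup>2 * (A + B)\<^sup>2 \<le> s * A\<^sup>2 + s\<^sup>2 / (1 - s) * B\<^sup>2"
proof -
  have "0 \<le> ((1-s)*A - s*B)\<^sup>2" by simp
  hence "2 * s * (1 - s) * A * B \<le> (1-s)\<^sup>2*A\<^sup>2 + s\<^sup>2*B\<^sup>2" by (simp add: power2_eq_square algebra_simps)
  hence h: "2 * s * A * B \<le> (1-s)*A\<^sup>2 + s\<^sup>2/(1-s)*B\<^sup>2" using assms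
    by (simp add: field_simps power2_eq_square)
  have "s * (A+B)\<^sup>2 = s*A\<^sup>2 + 2 * s * A * B + s*B\<^sup>2" by (simp add: power2_eq_square algebra_simps)
  also have "\<dots> \<le> s*A\<^sup>2 + (1-s)*A\<^sup>2 + s\<^sup>2/(1-s)*B\<^sup>2 + s*B\<^sup>2" using h by simp
  also have "\<dots> = A\<^sup>2 + s/(1-s)*B\<^sup>2" using assms by (simp add: field_simps power2_eq_square)
  finally have "s * (A+B)\<^sup>2 \<le> A\<^sup>2 + s/(1-s)*B\<^sup>2" .
  from mult_left_mono[OF this assms(1)] show ?thesis
    by (simp add: power2_eq_square algebra_simps)
qed

lemma sum_shift:
  fixes s :: real
  shows "(\<Sum>k<Suc t. s^(Suc t - k) * a k) = s * (\<Sum>k<t. s^(t - k) * a k) + s * a t"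
proof -
  have "(\<Sum>k<t. s^(Suc t - k) * a k) = (\<Sum>k<t. s * (s^(t - k) * a k))"
    by (rule sum.cong) (auto simp: Suc_diff_le less_imp_le)
  thus ?thesis by (simp add: sum_distrib_left)
qed

lemma geom_le:
  fixes s :: real
  assumes "0 \<le> s" "s < 1"
  shows "(\<Sum>k<t. s^(t - k)) \<le> s / (1 - s)"
proof (induction t)
  case 0
  then show ?case using assms by simp
next
  case (Suc t)
  have "(\<Sum>k<Suc t. s^(Suc t - k)) = s * (\<Sum>k<t. s^(t - k)) + s"
    using sum_shift[of s t "\<lambda>_. 1"] by simp
  also have "\<dots> \<le> s * (s / (1 - s)) + s" using Suc.IH assms by (intro add_right_mono mult_left_mono) auto
  also have "\<dots> = s / (1 - s)" using assms by (simp add: field_simps)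
  finally show ?case .
qed

lemma err_bound:
  fixes s \<alpha> :: real and Q :: "'v::real_normed_vector \<Rightarrow> 'v"
  assumes s: "0 \<le> s" "s < 1" and a: "0 \<le> \<alpha>"
    and Qb: "\<And>w. (norm (Q w - w))\<^sup>2 \<le> s\<^sup>2 * (norm w)\<^sup>2"
  shows "(norm (ef_err Q G xi p \<alpha> t i))\<^sup>2
     \<le> s / (1 - s) * (\<Sum>k<t. s^(t - k) * (\<alpha>\<^sup>2 * (norm (ef_grad Q G xi p \<alpha> k i))\<^sup>2))"
proof (induction t)
  case 0
  then show ?case by (simp add: ef_err_def)
next
  case (Suc t)
  define e where "e = ef_err Q G xi p \<alpha> t i"
  define g where "g = ef_grad Q G xi p \<alpha> t i"
  define S where "S = (\<Sum>k<t. s^(t - k) * (\<alpha>\<^sup>2 * (norm (ef_grad Q G xi p \<alpha> k i))\<^sup>2))"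
  have IH: "(norm e)\<^sup>2 \<le> s / (1 - s) * S" using Suc.IH unfolding e_def S_def .
  have "(norm (ef_err Q G xi p \<alpha> (Suc t) i))\<^sup>2 = (norm (Q (e + \<alpha> *\<^sub>R g) - (e + \<alpha> *\<^sub>R g)))\<^sup>2"
    unfolding ef_err_Suc e_def g_def by (simp add: norm_minus_commute)
  also have "\<dots> \<le> s\<^sup>2 * (norm (e + \<alpha> *\<^sub>R g))\<^sup>2" by (rule Qb)
  also have "\<dots> \<le> s\<^sup>2 * (norm e + \<alpha> * norm g)\<^sup>2"
    using a by (intro mult_left_mono power_mono) (auto intro: order_trans[OF norm_triangle_ineq])
  also have "\<dots> \<le> s * (norm e)\<^sup>2 + s\<^sup>2 / (1 - s) * (\<alpha> * norm g)\<^sup>2"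
    using a s by (intro key_ineq) auto
  also have "\<dots> \<le> s * (s / (1 - s) * S) + s\<^sup>2 / (1 - s) * (\<alpha> * norm g)\<^sup>2"
    using IH s by (intro add_right_mono mult_left_mono) auto
  also have "\<dots> = s / (1 - s) * (s * S + s * (\<alpha>\<^sup>2 * (norm g)\<^sup>2))"
    by (simp add: power2_eq_square algebra_simps add_divide_distrib)
  also have "\<dots> = s / (1 - s) * (\<Sum>k<Suc t. s^(Suc t - k) * (\<alpha>\<^sup>2 * (norm (ef_grad Q G xi p \<alpha> k i))\<^sup>2))"
    unfolding sum_shift S_def g_def ..
  finally show ?case .
qed


lemma diff_bound:
  fixes s \<alpha> :: real and Q :: "'v::real_normed_vector \<Rightarrow> 'v"
  assumes s: "0 \<le> s" "s < 1" and a: "0 \<le> \<alpha>" and p: "p \<ge> 1"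
    and Qb: "\<And>w. (norm (Q w - w))\<^sup>2 \<le> s\<^sup>2 * (norm w)\<^sup>2"
  shows "(norm (ef_x Q G xi p \<alpha> t - ef_view Q G xi p \<alpha> t q))\<^sup>2
     \<le> (1 / real p) * (\<Sum>i\<in>{1..p}. s / (1 - s) * (\<Sum>k<t. s^(t - k) * (\<alpha>\<^sup>2 * (norm (ef_grad Q G xi p \<alpha> k i))\<^sup>2)))"
proof -
  let ?e = "\<lambda>i. ef_err Q G xi p \<alpha> t i"
  have "(norm (ef_x Q G xi p \<alpha> t - ef_view Q G xi p \<alpha> t q))\<^sup>2 = (1 / real p)\<^sup>2 * (norm (\<Sum>i\<in>{1..p}. ?e i))\<^sup>2"
    unfolding ef_diff by (simp add: power_mult_distrib power_divide)
  also have "\<dots> \<le> (1 / real p)\<^sup>2 * (\<Sum>i\<in>{1..p}. norm (?e i))\<^sup>2"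
    by (intro mult_left_mono power_mono norm_sum) auto
  also have "\<dots> \<le> (1 / real p)\<^sup>2 * ((\<Sum>i\<in>{1..p}. (norm (?e i))\<^sup>2) * real p)"
    using sum_squared_le_sum_of_squares[of "\<lambda>i. norm (?e i)" "{1..p}"]
    by (intro mult_left_mono) auto
  also have "\<dots> = (1 / real p) * (\<Sum>i\<in>{1..p}. (norm (?e i))\<^sup>2)"
    using p by (simp add: power2_eq_square)
  also have "\<dots> \<le> (1 / real p) * (\<Sum>i\<in>{1..p}. s / (1 - s) * (\<Sum>k<t. s^(t - k) * (\<alpha>\<^sup>2 * (norm (ef_grad Q G xi p \<alpha> k i))\<^sup>2)))"
    by (intro mult_left_mono sum_mono err_bound[OF s a Qb]) auto
  finally show ?thesis .
qed

lemma final_poly: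
  fixes s :: real
  assumes "0 \<le> s" "s < 1"
  shows "s\<^sup>2 / (1 - s)\<^sup>2 \<le> (2 - s\<^sup>2) * s\<^sup>2 / (1 - s\<^sup>2)^3"
proof -
  have pos: "0 < 1 - s" "0 < 1 + s" using assms by auto
  have "(1 - s) * (1 + s)^3 \<le> 2 - s\<^sup>2"
  proof -
    have "2 - s\<^sup>2 - (1 - s) * (1 + s)^3 = (s\<^sup>2 + s - 1)\<^sup>2"
      by (simp add: power2_eq_square power3_eq_cube algebra_simps)
    thus ?thesis by (smt (verit) zero_le_power2)
  qed
  hence "s\<^sup>2 * ((1 - s) * (1 + s)^3) \<le> s\<^sup>2 * (2 - s\<^sup>2)" by (intro mult_left_mono) auto
  hence "s\<^sup>2 * ((1 - s)^2 * ((1 - s) * (1 + s)^3)) \<le> (2 - s\<^sup>2) * s\<^sup>2 * (1 - s)\<^sup>2"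
    using pos by (smt (verit) mult.commute mult.left_commute mult_left_mono zero_le_power2)
  moreover have "(1 - s\<^sup>2)^3 = (1 - s)^2 * ((1 - s) * (1 + s)^3)"
    by (simp add: power2_eq_square power3_eq_cube algebra_simps)
  ultimately have "s\<^sup>2 * (1 - s\<^sup>2)^3 \<le> (2 - s\<^sup>2) * s\<^sup>2 * (1 - s)\<^sup>2" by simp
  moreover have "0 < (1 - s\<^sup>2)^3" "0 < (1 - s)\<^sup>2" using pos assms
    by (auto simp: power2_eq_square intro!: mult_pos_pos zero_less_power)
       (smt (verit) mult_left_le_one_le assms)
  ultimately show ?thesis by (simp add: divide_simps)
qed

theorem mainTheorem13:
  fixes M :: "'a measure"
    and Q :: "'v::euclidean_space \<Rightarrow> 'v"
    and G :: "'v \<Rightarrow> 'b \<Rightarrow> 'v"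
    and \<xi> :: "nat \<Rightarrow> nat \<Rightarrow> 'a \<Rightarrow> 'b"
    and p q t :: nat
    and \<alpha> \<gamma> Mg :: real
  assumes "prob_space M"
    and "p \<ge> 1"
    and "\<alpha> > 0"
    and "0 \<le> \<gamma>" and "\<gamma> < 1"
    and "\<And>w. (norm (Q w - w))\<^sup>2 \<le> \<gamma> * (norm w)\<^sup>2"
    and "\<And>s i. i \<in> {1..p} \<Longrightarrow>
           integrable M (\<lambda>\<omega>. (norm (ef_grad Q G (\<lambda>s' j. \<xi> s' j \<omega>) p \<alpha> s i))\<^sup>2)"
    and "\<And>s i. i \<in> {1..p} \<Longrightarrow>
           (\<integral>\<omega>. (norm (ef_grad Q G (\<lambda>s' j. \<xi> s' j \<omega>) p \<alpha> s i))\<^sup>2 \<partial>M) \<le> Mg\<^sup>2"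
    and "q \<in> {1..p}"
  shows "(\<integral>\<omega>. (norm (ef_x Q G (\<lambda>s j. \<xi> s j \<omega>) p \<alpha> t
                     - ef_view Q G (\<lambda>s j. \<xi> s j \<omega>) p \<alpha> t q))\<^sup>2 \<partial>M)
         \<le> (2 - \<gamma>) * \<gamma> * Mg\<^sup>2 * \<alpha>\<^sup>2 / (1 - \<gamma>)^3"
proof -
  interpret P: prob_space M by fact
  define s where "s = sqrt \<gamma>"
  have gs: "\<gamma> = s\<^sup>2" using assms(4) unfolding s_def by simp
  have s: "0 \<le> s" "s < 1" using assms(4,5) unfolding s_def by auto
  have Qb: "\<And>w. (norm (Q w - w))\<^sup>2 \<le> s\<^sup>2 * (norm w)\<^sup>2" using assms(6) gs by simp
  define gn where "gn = (\<lambda>k i \<omega>. (norm (ef_grad Q G (\<lambda>s' j. \<xi> s' j \<omega>) p \<alpha> k i))\<^sup>2)"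
  define F where "F = (\<lambda>\<omega>. (1 / real p) * (\<Sum>i\<in>{1..p}. s / (1 - s) * (\<Sum>k<t. s^(t - k) * (\<alpha>\<^sup>2 * gn k i \<omega>))))"
  define f where "f = (\<lambda>\<omega>. (norm (ef_x Q G (\<lambda>s j. \<xi> s j \<omega>) p \<alpha> t
                     - ef_view Q G (\<lambda>s j. \<xi> s j \<omega>) p \<alpha> t q))\<^sup>2)"
  have fF: "f \<omega> \<le> F \<omega>" for \<omega>
    unfolding f_def F_def gn_def using diff_bound[OF s less_imp_le[OF assms(3)] assms(2) Qb, of G "\<lambda>s j. \<xi> s j \<omega>" t q] by simp
  have intF: "integrable M F"
    unfolding F_def using assms(7) unfolding gn_def by (intro integrable_mult_right integrable_sum) auto
  have F0: "0 \<le> F \<omega>" for \<omega>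
    unfolding F_def gn_def using s by (intro mult_nonneg_nonneg sum_nonneg) auto
  have "integral\<^sup>L M f \<le> integral\<^sup>L M F"
  proof (cases "integrable M f")
    case True thus ?thesis using intF fF by (intro integral_mono) auto
  next
    case False thus ?thesis using F0 by (simp add: not_integrable_integral_eq integral_nonneg_AE)
  qed
  also have "integral\<^sup>L M F = (1 / real p) * (\<Sum>i\<in>{1..p}. s / (1 - s) * (\<Sum>k<t. s^(t - k) * (\<alpha>\<^sup>2 * integral\<^sup>L M (gn k i))))"
    unfolding F_def using assms(7) unfolding gn_def
    by (simp add: integral_sum integrable_sum integrable_mult_right)
  also have "\<dots> \<le> (1 / real p) * (\<Sum>i\<in>{1..p}. s / (1 - s) * (\<Sum>k<t. s^(t - k) * (\<alpha>\<^sup>2 * Mg\<^sup>2)))"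
    using assms(8) s unfolding gn_def
    by (intro mult_left_mono sum_mono mult_nonneg_nonneg) auto
  also have "\<dots> = s / (1 - s) * (\<alpha>\<^sup>2 * Mg\<^sup>2) * (\<Sum>k<t. s^(t - k))"
    unfolding sum_distrib_right[symmetric] using assms(2) by simp
  also have "\<dots> \<le> s / (1 - s) * (\<alpha>\<^sup>2 * Mg\<^sup>2) * (s / (1 - s))"
    using geom_le[OF s] s by (intro mult_left_mono) auto
  also have "\<dots> = (s\<^sup>2 / (1 - s)\<^sup>2) * (\<alpha>\<^sup>2 * Mg\<^sup>2)"
    by (simp add: power2_eq_square)
  also have "\<dots> \<le> ((2 - s\<^sup>2) * s\<^sup>2 / (1 - s\<^sup>2)^3) * (\<alpha>\<^sup>2 * Mg\<^sup>2)"
    using final_poly[OF s] by (intro mult_right_mono) auto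
  also have "\<dots> = (2 - \<gamma>) * \<gamma> * Mg\<^sup>2 * \<alpha>\<^sup>2 / (1 - \<gamma>)^3"
    unfolding gs by simp
  finally show ?thesis unfolding f_def .
qed

end
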